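(* Let $A$ and $B$ be finite simple graphs, and fix $a \in V(A)$ and $b \in V(B)$. Let $D$ be the graph obtained from the disjoint union of $A$ and $B$ by identifying the vertices $a$ and $b$. If $A$ and $B$ both satisfy the bunkbed conjecture, then $D$ satisfies the bunkbed conjecture.
   Context: All graphs are finite and simple. For a graph $G$, a weight is a function $\mu\colon E(G)\to[0,1]$; the associated edge-percolation probability space has sample space $\Omega=\mathscr P(E(G))$ (all subsets of edges), with $\mathbb P_{G,\mu}(X)=\prod_{e\in X}\mu(e)\prod_{e\notin X}(1-\mu(e))$ for $X\subseteq E(G)$, i.e. each edge $e$ is independently open with probability $\mu(e)$. For $x,y\in V(G)$, $(x\sim y)$ (or $(x\sim_G y)$) is the event that $x$ and $y$ are joined by a path of open edges. The bunkbed graph $BB(G)=G\,\Box\, K_2$ has vertex set $V(G)\times\{0,1\}$, writing $x^-=(x,0)$, $x^+=(x,1)$, and edges $x^-y^-$ and $x^+y^+$ for every $xy\in E(G)$, plus the vertical edges $x^-x^+$ for every $x\in V(G)$. A weight $\mu$ on $BB(G)$ is symmetric if $\mu(x^-y^-)=\mu(x^+y^+)$ for every $xy\in E(G)$ (vertical edges may have arbitrary weights). A graph $G$ satisfies the bunkbed conjecture if for every symmetric weight $\mu$ on $BB(G)$ and all $x,y\in V(G)$, $\mathbb P_{BB(G),\mu}(x^-\sim y^-)\ge \mathbb P_{BB(G),\mu}(x^-\sim y^+)$. *)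

theory Defs
  imports Complex_Main
begin

definition simple_graph :: "'a set \<Rightarrow> 'a set set \<Rightarrow> bool" where
  "simple_graph V E \<longleftrightarrow> finite V \<and>
     (\<forall>e\<in>E. \<exists>x y. x \<in> V \<and> y \<in> V \<and> x \<noteq> y \<and> e = {x, y})"

definition joined :: "'a set set \<Rightarrow> 'a \<Rightarrow> 'a \<Rightarrow> bool" where
  "joined X x y \<longleftrightarrow> (x, y) \<in> {(u, v). {u, v} \<in> X}\<^sup>*"

definition perc_prob :: "'a set set \<Rightarrow> ('a set \<Rightarrow> real) \<Rightarrow> ('a set set \<Rightarrow> bool) \<Rightarrow> real" where
  "perc_prob E mu P = (\<Sum>X\<in>{X. X \<subseteq> E \<and> P X}.
      (\<Prod>e\<in>X. mu e) * (\<Prod>e\<in>E - X. 1 - mu e))"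

text \<open>Bunkbed graph: x^- = (x, False), x^+ = (x, True).\<close>
definition bb_vertices :: "'a set \<Rightarrow> ('a \<times> bool) set" where
  "bb_vertices V = V \<times> UNIV"

definition bb_edges :: "'a set \<Rightarrow> 'a set set \<Rightarrow> ('a \<times> bool) set set" where
  "bb_edges V E = {{(x, s), (y, s)} | x y s. {x, y} \<in> E}
                 \<union> {{(x, False), (x, True)} | x. x \<in> V}"

definition symmetric_weight :: "'a set \<Rightarrow> 'a set set \<Rightarrow> (('a \<times> bool) set \<Rightarrow> real) \<Rightarrow> bool" where
  "symmetric_weight V E mu \<longleftrightarrow>
     (\<forall>e\<in>bb_edges V E. 0 \<le> mu e \<and> mu e \<le> 1) \<and>
     (\<forall>x y. {x, y} \<in> E \<longrightarrow> mu {(x, False), (y, False)} = mu {(x, True), (y, True)})"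

definition bunkbed :: "'a set \<Rightarrow> 'a set set \<Rightarrow> bool" where
  "bunkbed V E \<longleftrightarrow> (\<forall>mu. symmetric_weight V E mu \<longrightarrow>
     (\<forall>x\<in>V. \<forall>y\<in>V.
        perc_prob (bb_edges V E) mu (\<lambda>X. joined X (x, False) (y, True))
        \<le> perc_prob (bb_edges V E) mu (\<lambda>X. joined X (x, False) (y, False))))"

text \<open>Gluing: disjoint union of A (left copy) and B (right copy) with b identified with a.\<close>
definition glue_map :: "'a \<Rightarrow> 'b \<Rightarrow> 'b \<Rightarrow> 'a + 'b" where
  "glue_map a b v = (if v = b then Inl a else Inr v)"

definition glue_vertices :: "'a set \<Rightarrow> 'b set \<Rightarrow> 'a \<Rightarrow> 'b \<Rightarrow> ('a + 'b) set" where
  "glue_vertices VA VB a b = Inl ` VA \<union> glue_map a b ` VB"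

definition glue_edges :: "'a set set \<Rightarrow> 'b set set \<Rightarrow> 'a \<Rightarrow> 'b \<Rightarrow> ('a + 'b) set set" where
  "glue_edges EA EB a b = (\<lambda>e. Inl ` e) ` EA \<union> (\<lambda>e. glue_map a b ` e) ` EB"

end

theory Submission
  imports Defs
begin


definition wt :: "'e set \<Rightarrow> ('e \<Rightarrow> real) \<Rightarrow> 'e set \<Rightarrow> real" where
  "wt E mu X = (\<Prod>e\<in>X. mu e) * (\<Prod>e\<in>E - X. 1 - mu e)"

definition PEx :: "'e set \<Rightarrow> ('e \<Rightarrow> real) \<Rightarrow> ('e set \<Rightarrow> real) \<Rightarrow> real" where
  "PEx E mu f = (\<Sum>X\<in>Pow E. wt E mu X * f X)"

lemma perc_prob_Ex:
  assumes "finite E"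
  shows "perc_prob E mu P = PEx E mu (\<lambda>X. if P X then 1 else 0)"
proof -
  have "{X. X \<subseteq> E \<and> P X} = {X \<in> Pow E. P X}" by auto
  then have "perc_prob E mu P = (\<Sum>X\<in>{X \<in> Pow E. P X}. wt E mu X)"
    unfolding perc_prob_def wt_def by simp
  also have "\<dots> = (\<Sum>X\<in>Pow E. if P X then wt E mu X else 0)"
    using sum.inter_filter[of "Pow E" "wt E mu" P] assms by simp
  also have "\<dots> = PEx E mu (\<lambda>X. if P X then 1 else 0)"
    unfolding PEx_def by (rule sum.cong) auto
  finally show ?thesis .
qed

lemma PEx_cong:
  assumes "\<And>e. e \<in> E \<Longrightarrow> mu e = nu e" "\<And>X. X \<subseteq> E \<Longrightarrow> f X = g X"
  shows "PEx E mu f = PEx E nu g"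
  unfolding PEx_def wt_def
proof (rule sum.cong[OF refl])
  fix X assume X: "X \<in> Pow E"
  have "(\<Prod>e\<in>X. mu e) = (\<Prod>e\<in>X. nu e)" using X assms(1) by (intro prod.cong) auto
  moreover have "(\<Prod>e\<in>E - X. 1 - mu e) = (\<Prod>e\<in>E - X. 1 - nu e)" using assms(1) by (intro prod.cong) auto
  ultimately show "(\<Prod>e\<in>X. mu e) * (\<Prod>e\<in>E - X. 1 - mu e) * f X = (\<Prod>e\<in>X. nu e) * (\<Prod>e\<in>E - X. 1 - nu e) * g X"
    using X assms(2) by simp
qed

lemma PEx_add: "PEx E mu (\<lambda>X. f X + g X) = PEx E mu f + PEx E mu g"
  unfolding PEx_def by (simp add: distrib_left sum.distrib)

lemma PEx_diff: "PEx E mu (\<lambda>X. f X - g X) = PEx E mu f - PEx E mu g"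
  unfolding PEx_def by (simp add: right_diff_distrib sum_subtractf)

lemma PEx_cmult: "PEx E mu (\<lambda>X. c * f X) = c * PEx E mu f"
  unfolding PEx_def by (simp add: sum_distrib_left mult.left_commute)

lemma PEx_multc: "PEx E mu (\<lambda>X. f X * c) = PEx E mu f * c"
  unfolding PEx_def by (simp add: sum_distrib_right mult.assoc)

lemma wt_union:
  assumes "finite E1" "finite E2" "E1 \<inter> E2 = {}" "X1 \<subseteq> E1" "X2 \<subseteq> E2"
  shows "wt (E1 \<union> E2) mu (X1 \<union> X2) = wt E1 mu X1 * wt E2 mu X2"
proof -
  have f1: "finite X1" "finite X2" using finite_subset[OF assms(4) assms(1)] finite_subset[OF assms(5) assms(2)] by auto
  have d: "X1 \<inter> X2 = {}" using assms by auto
  have e: "(E1 \<union> E2) - (X1 \<union> X2) = (E1 - X1) \<union> (E2 - X2)" using assms by auto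
  have d2: "(E1 - X1) \<inter> (E2 - X2) = {}" using assms by auto
  show ?thesis unfolding wt_def
    by (simp add: prod.union_disjoint[OF f1 d] e prod.union_disjoint d2 assms)
qed

lemma PEx_fubini:
  assumes "finite E1" "finite E2" "E1 \<inter> E2 = {}"
  shows "PEx (E1 \<union> E2) mu F = PEx E1 mu (\<lambda>X1. PEx E2 mu (\<lambda>X2. F (X1 \<union> X2)))"
proof -
  let ?h = "\<lambda>(X1, X2). X1 \<union> (X2::'a set)"
  have inj: "inj_on ?h (Pow E1 \<times> Pow E2)"
  proof (rule inj_onI, clarsimp)
    fix X1 X2 Y1 Y2 assume h: "X1 \<subseteq> E1" "X2 \<subseteq> E2" "Y1 \<subseteq> E1" "Y2 \<subseteq> E2" "X1 \<union> X2 = Y1 \<union> Y2"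
    have "X1 = (X1 \<union> X2) \<inter> E1" "Y1 = (Y1 \<union> Y2) \<inter> E1" "X2 = (X1 \<union> X2) \<inter> E2" "Y2 = (Y1 \<union> Y2) \<inter> E2"
      using h assms(3) by auto
    then show "X1 = Y1 \<and> X2 = Y2" using h(5) by metis
  qed
  have img: "?h ` (Pow E1 \<times> Pow E2) = Pow (E1 \<union> E2)"
  proof
    show "?h ` (Pow E1 \<times> Pow E2) \<subseteq> Pow (E1 \<union> E2)" by auto
    show "Pow (E1 \<union> E2) \<subseteq> ?h ` (Pow E1 \<times> Pow E2)"
    proof
      fix X assume "X \<in> Pow (E1 \<union> E2)"
      then have "X = ?h (X \<inter> E1, X \<inter> E2)" "(X \<inter> E1, X \<inter> E2) \<in> Pow E1 \<times> Pow E2" by auto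
      then show "X \<in> ?h ` (Pow E1 \<times> Pow E2)" by blast
    qed
  qed
  have "PEx (E1 \<union> E2) mu F = (\<Sum>p\<in>Pow E1 \<times> Pow E2. wt (E1 \<union> E2) mu (?h p) * F (?h p))"
    unfolding PEx_def by (subst img[symmetric], subst sum.reindex[OF inj]) (simp add: comp_def)
  also have "\<dots> = (\<Sum>p\<in>Pow E1 \<times> Pow E2. wt E1 mu (fst p) * (wt E2 mu (snd p) * F (fst p \<union> snd p)))"
    by (rule sum.cong[OF refl]) (auto simp: wt_union[OF assms])
  also have "\<dots> = (\<Sum>X1\<in>Pow E1. \<Sum>X2\<in>Pow E2. wt E1 mu X1 * (wt E2 mu X2 * F (X1 \<union> X2)))"
    by (subst sum.cartesian_product) (simp add: case_prod_beta)
  also have "\<dots> = PEx E1 mu (\<lambda>X1. PEx E2 mu (\<lambda>X2. F (X1 \<union> X2)))"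
    unfolding PEx_def by (simp add: sum_distrib_left)
  finally show ?thesis .
qed

lemma PEx_single: "PEx {e} mu f = (1 - mu e) * f {} + mu e * f {e}"
proof -
  have "Pow {e} = {{}, {e}}" by auto
  then show ?thesis unfolding PEx_def wt_def by (simp add: insert_Diff_if)
qed

lemma PEx_prod:
  assumes "finite E1" "finite E2" "E1 \<inter> E2 = {}"
  shows "PEx (E1 \<union> E2) mu (\<lambda>X. f (X \<inter> E1) * g (X \<inter> E2)) = PEx E1 mu f * PEx E2 mu g"
proof -
  have "PEx (E1 \<union> E2) mu (\<lambda>X. f (X \<inter> E1) * g (X \<inter> E2))
        = PEx E1 mu (\<lambda>X1. PEx E2 mu (\<lambda>X2. f ((X1 \<union> X2) \<inter> E1) * g ((X1 \<union> X2) \<inter> E2)))"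
    by (rule PEx_fubini[OF assms])
  also have "\<dots> = PEx E1 mu (\<lambda>X1. PEx E2 mu (\<lambda>X2. f X1 * g X2))"
  proof (rule PEx_cong[OF refl])
    fix X1 assume "X1 \<subseteq> E1"
    show "PEx E2 mu (\<lambda>X2. f ((X1 \<union> X2) \<inter> E1) * g ((X1 \<union> X2) \<inter> E2)) = PEx E2 mu (\<lambda>X2. f X1 * g X2)"
    proof (rule PEx_cong[OF refl])
      fix X2 assume "X2 \<subseteq> E2"
      then have "(X1 \<union> X2) \<inter> E1 = X1" "(X1 \<union> X2) \<inter> E2 = X2" using \<open>X1 \<subseteq> E1\<close> assms(3) by auto
      then show "f ((X1 \<union> X2) \<inter> E1) * g ((X1 \<union> X2) \<inter> E2) = f X1 * g X2" by simp
    qed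
  qed
  also have "\<dots> = PEx E1 mu f * PEx E2 mu g"
    by (simp add: PEx_cmult PEx_multc)
  finally show ?thesis .
qed

lemma PEx_one: "finite E \<Longrightarrow> PEx E mu (\<lambda>_. 1) = 1"
proof (induction E rule: finite_induct)
  case empty then show ?case by (simp add: PEx_def wt_def)
next
  case (insert e E)
  have "PEx ({e} \<union> E) mu (\<lambda>X. (\<lambda>_. 1) (X \<inter> {e}) * (\<lambda>_. 1) (X \<inter> E)) = PEx {e} mu (\<lambda>_. 1) * PEx E mu (\<lambda>_. 1)"
    by (rule PEx_prod) (use insert in auto)
  then show ?case using insert by (simp add: PEx_single)
qed

lemma PEx_remove:
  assumes "finite E" "e \<in> E"
  shows "PEx E mu f = PEx (E - {e}) mu (\<lambda>X. (1 - mu e) * f X + mu e * f (insert e X))"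
proof -
  have E: "E = (E - {e}) \<union> {e}" using assms by auto
  have "PEx E mu f = PEx (E - {e}) mu (\<lambda>X1. PEx {e} mu (\<lambda>X2. f (X1 \<union> X2)))"
    by (subst E, rule PEx_fubini) (use assms in auto)
  then show ?thesis by (simp add: PEx_single)
qed

lemma PEx_weight0:
  assumes "finite E" "e \<in> E" "mu e = 0"
  shows "PEx E mu f = PEx (E - {e}) mu f"
  using PEx_remove[OF assms(1,2)] assms(3) by simp

lemma PEx_weight1:
  assumes "finite E" "e \<in> E" "mu e = 1"
  shows "PEx E mu f = PEx (E - {e}) mu (\<lambda>X. f (insert e X))"
  using PEx_remove[OF assms(1,2)] assms(3) by simp

lemma PEx_reindex:
  assumes "inj_on h E"
  shows "PEx (h ` E) mu f = PEx E (mu \<circ> h) (\<lambda>X. f (h ` X))"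
proof -
  have inj: "inj_on (image h) (Pow E)" by (rule inj_on_image_Pow[OF assms])
  have img: "Pow (h ` E) = image h ` Pow E" by (rule image_Pow_surj[symmetric]) simp
  have w: "wt (h ` E) mu (h ` X) = wt E (mu \<circ> h) X" if "X \<subseteq> E" for X
  proof -
    have i1: "inj_on h X" using assms that inj_on_subset by blast
    have i2: "inj_on h (E - X)" using assms inj_on_subset by blast
    have "h ` E - h ` X = h ` (E - X)" using assms that by (simp add: inj_on_image_set_diff)
    then show ?thesis unfolding wt_def by (simp add: prod.reindex[OF i1] prod.reindex[OF i2] comp_def)
  qed
  show ?thesis unfolding PEx_def img
    by (subst sum.reindex[OF inj]) (simp add: w comp_def)
qed




lemma joined_refl[simp]: "joined X x x"
  unfolding joined_def by simp

lemma joined_edge: "{x, y} \<in> X \<Longrightarrow> joined X x y"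
  unfolding joined_def by auto

lemma joined_trans: "joined X x y \<Longrightarrow> joined X y z \<Longrightarrow> joined X x z"
  unfolding joined_def by (rule rtrancl_trans)

lemma joined_step: "joined X x y \<Longrightarrow> {y, z} \<in> X \<Longrightarrow> joined X x z"
  using joined_trans joined_edge by metis

lemma joined_induct[consumes 1, case_names refl step]:
  assumes "joined X x y" "P x" "\<And>y z. joined X x y \<Longrightarrow> {y, z} \<in> X \<Longrightarrow> P y \<Longrightarrow> P z"
  shows "P y"
  using assms(1) unfolding joined_def
proof (induction rule: rtrancl_induct)
  case base then show ?case using assms(2) by simp
next
  case (step y z) then show ?case using assms(3) unfolding joined_def by auto
qed

lemma joined_sym: "joined X x y \<Longrightarrow> joined X y x"
proof (induction rule: joined_induct)
  case refl then show ?case by simp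
next
  case (step y z)
  have "{z, y} \<in> X" using step(2) by (simp add: insert_commute)
  then show ?case using step(3) joined_edge joined_trans by metis
qed

lemma joined_commute: "joined X x y \<longleftrightarrow> joined X y x"
  by (rule iffI) (erule joined_sym)+

lemma joined_mono: "joined X x y \<Longrightarrow> X \<subseteq> Y \<Longrightarrow> joined Y x y"
proof (induction rule: joined_induct)
  case (step y z) then show ?case using joined_step[of Y x y z] by blast
qed simp

lemma joined_subst:
  assumes "joined X x y" "\<And>p q. {p, q} \<in> X \<Longrightarrow> joined Y p q"
  shows "joined Y x y"
  using assms(1)
proof (induction rule: joined_induct)
  case (step y z) then show ?case using joined_trans[of Y x y z] assms(2) by blast
qed simp

lemma joined_vertex:
  assumes "joined X x y" "x \<noteq> y" shows "y \<in> \<Union>X"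
  using assms by (induction rule: joined_induct) auto

lemma joined_vertex': "joined X x y \<Longrightarrow> x \<noteq> y \<Longrightarrow> x \<in> \<Union>X"
  using joined_vertex joined_sym by metis

lemma joined_image:
  assumes "inj f"
  shows "joined ((\<lambda>e. f ` e) ` X) (f x) (f y) \<longleftrightarrow> joined X x y"
proof
  assume "joined X x y"
  then show "joined ((\<lambda>e. f ` e) ` X) (f x) (f y)"
  proof (induction rule: joined_induct)
    case refl then show ?case by simp
  next
    case (step y z)
    have "f ` {y, z} \<in> (\<lambda>e. f ` e) ` X" using step(2) by (rule imageI)
    then have "{f y, f z} \<in> (\<lambda>e. f ` e) ` X" by simp
    then show ?case using step(3) joined_step by metis
  qed
next
  assume h: "joined ((\<lambda>e. f ` e) ` X) (f x) (f y)"
  have "\<exists>w. z = f w \<and> joined X x w" if "joined ((\<lambda>e. f ` e) ` X) (f x) z" for z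
    using that
  proof (induction rule: joined_induct)
    case refl then show ?case by auto
  next
    case (step y' z)
    then obtain w where w: "y' = f w" "joined X x w" by auto
    from step(2) obtain e where e: "e \<in> X" "{y', z} = f ` e" by auto
    then have "z \<in> f ` e" by auto
    then obtain w' where w': "w' \<in> e" "z = f w'" by auto
    have "f w \<in> f ` e" using e w by auto
    then have "w \<in> e" using assms by (simp add: inj_image_mem_iff)
    have "e \<subseteq> {w, w'}"
    proof
      fix v assume "v \<in> e"
      then have "f v \<in> {f w, f w'}" using e w w' by auto
      then show "v \<in> {w, w'}" using assms injD by fastforce
    qed
    then have "e = {w, w'}" using \<open>w \<in> e\<close> w' by auto
    then have "joined X x w'" using w e joined_step by metis
    then show ?case using w' by auto
  qed
  from this[OF h] obtain w where "f y = f w" "joined X x w" by blast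
  then show "joined X x y" using assms injD by metis
qed




section \<open>Cut lemma\<close>

definition Mrel :: "'v set set \<Rightarrow> 'v set set \<Rightarrow> 'v \<Rightarrow> 'v \<Rightarrow> 'v \<Rightarrow> 'v \<Rightarrow> bool" where
  "Mrel X1 X2 k1 k2 u w \<longleftrightarrow> joined X1 u w \<or> joined X2 u w \<or>
     (\<exists>k\<in>{k1, k2}. \<exists>k'\<in>{k1, k2}. (joined X1 u k \<or> joined X2 u k) \<and>
        (k = k' \<or> joined X1 k1 k2 \<or> joined X2 k1 k2) \<and> (joined X1 k' w \<or> joined X2 k' w))"

lemma Mrel_commute: "Mrel X1 X2 k1 k2 u w = Mrel X2 X1 k1 k2 u w"
  unfolding Mrel_def by blast

lemma Mrel_I1: "joined X1 u w \<Longrightarrow> Mrel X1 X2 k1 k2 u w"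
  unfolding Mrel_def by simp

lemma Mrel_I3: "k \<in> {k1, k2} \<Longrightarrow> k' \<in> {k1, k2} \<Longrightarrow> joined X1 u k \<or> joined X2 u k \<Longrightarrow>
   k = k' \<or> joined X1 k1 k2 \<or> joined X2 k1 k2 \<Longrightarrow> joined X1 k' w \<or> joined X2 k' w \<Longrightarrow>
   Mrel X1 X2 k1 k2 u w"
  unfolding Mrel_def by (intro disjI2) (rule bexI[of _ k], rule bexI[of _ k'], auto)

lemma Mrel_E:
  assumes "Mrel X1 X2 k1 k2 u w"
  obtains "joined X1 u w" | "joined X2 u w" |
     k k' where "k \<in> {k1, k2}" "k' \<in> {k1, k2}" "joined X1 u k \<or> joined X2 u k"
        "k = k' \<or> joined X1 k1 k2 \<or> joined X2 k1 k2" "joined X1 k' w \<or> joined X2 k' w"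
  using assms unfolding Mrel_def by metis

lemma Mrel_step:
  assumes M: "Mrel X1 X2 k1 k2 u w" and e: "{w, z} \<in> X1"
    and W1: "\<Union>X1 \<subseteq> W1" and W2: "\<Union>X2 \<subseteq> W2" and K: "W1 \<inter> W2 \<subseteq> {k1, k2}"
  shows "Mrel X1 X2 k1 k2 u z"
proof -
  have wW1: "w \<in> W1" using e W1 by auto
  have j1: "joined X1 w z" using e joined_edge by metis
  have inK: "w \<in> {k1, k2}" if "joined X2 p w" "p \<noteq> w" for p
  proof -
    have "w \<in> W2" using joined_vertex[OF that] W2 by auto
    then show ?thesis using wW1 K by auto
  qed
  from M show ?thesis
  proof (cases rule: Mrel_E)
    case 1 then have "joined X1 u z" by (rule joined_trans[OF _ j1])
    then show ?thesis by (rule Mrel_I1)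
  next
    case 2
    show ?thesis
    proof (cases "u = w")
      case True then show ?thesis using j1 Mrel_I1 by metis
    next
      case False
      then have wK: "w \<in> {k1, k2}" using inK 2 by auto
      show ?thesis by (rule Mrel_I3[of w _ _ w]) (use wK 2 j1 in auto)
    qed
  next
    case (3 k k')
    show ?thesis
    proof (cases "joined X1 k' w")
      case True
      then have "joined X1 k' z" by (rule joined_trans[OF _ j1])
      then show ?thesis using 3 by (intro Mrel_I3[of k _ _ k']) auto
    next
      case False
      then have j2: "joined X2 k' w" using 3 by auto
      show ?thesis
      proof (cases "k' = w")
        case True then show ?thesis using 3 j1 by (intro Mrel_I3[of k _ _ k']) auto
      next
        case False
        then have wK: "w \<in> {k1, k2}" using inK j2 by auto
        have "k = w \<or> joined X1 k1 k2 \<or> joined X2 k1 k2"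
        proof (cases "k = w")
          case False
          show ?thesis
          proof (cases "k = k'")
            case True
            then have "joined X2 k w" "k \<noteq> w" using j2 \<open>k' \<noteq> w\<close> by auto
            then have "joined X2 k1 k2" using 3(1) wK by (auto simp: joined_commute)
            then show ?thesis by simp
          next
            case False then show ?thesis using 3 by auto
          qed
        qed simp
        then show ?thesis using 3 wK j1 by (intro Mrel_I3[of k _ _ w]) auto
      qed
    qed
  qed
qed

lemma joined_Mrel:
  assumes "joined (X1 \<union> X2) u w"
    and W1: "\<Union>X1 \<subseteq> W1" and W2: "\<Union>X2 \<subseteq> W2" and K: "W1 \<inter> W2 \<subseteq> {k1, k2}"
  shows "Mrel X1 X2 k1 k2 u w"
  using assms(1)
proof (induction rule: joined_induct)
  case refl then show ?case unfolding Mrel_def by simp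
next
  case (step y z)
  show ?case
  proof (cases "{y, z} \<in> X1")
    case True then show ?thesis using Mrel_step[OF step(3) True W1 W2 K] by simp
  next
    case False
    then have "{y, z} \<in> X2" using step(2) by auto
    then show ?thesis using Mrel_step[of X2 X1 k1 k2 u y z W2 W1] step(3) W1 W2 K
      by (auto simp: Mrel_commute)
  qed
qed

lemma cut_other_side:
  assumes W1: "\<Union>X1 \<subseteq> W1" and W2: "\<Union>X2 \<subseteq> W2" and K: "W1 \<inter> W2 \<subseteq> {k1, k2}"
    and u: "u \<in> W1" "u \<notin> W2" and w: "w \<notin> W1"
  shows "joined (X1 \<union> X2) u w \<longleftrightarrow>
     (joined X1 u k1 \<and> joined X2 k1 w) \<or> (joined X1 u k2 \<and> joined X2 k2 w)"
proof
  assume h: "joined (X1 \<union> X2) u w"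
  have uw: "u \<noteq> w" using u w by auto
  have A: "joined X1 u k" if "joined X1 u k \<or> joined X2 u k" for k
  proof (cases "joined X1 u k")
    case False
    then have "joined X2 u k" using that by auto
    moreover have "u \<notin> \<Union>X2" using u W2 by auto
    ultimately have "u = k" using joined_vertex'[of X2 u k] by auto
    then show ?thesis by simp
  qed simp
  have B: "joined X2 k w" if "joined X1 k w \<or> joined X2 k w" for k
  proof (cases "joined X2 k w")
    case False
    then have "joined X1 k w" using that by auto
    moreover have "w \<notin> \<Union>X1" using w W1 by auto
    ultimately have "k = w" using joined_vertex[of X1 k w] by auto
    then show ?thesis by simp
  qed simp
  have n1: "\<not> joined X1 u w" using joined_vertex[of X1 u w] uw W1 w by auto
  have n2: "\<not> joined X2 u w" using joined_vertex'[of X2 u w] uw W2 u by auto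
  from joined_Mrel[OF h W1 W2 K] n1 n2 obtain k k' where
    c: "k \<in> {k1, k2}" "k' \<in> {k1, k2}" "joined X1 u k"
        "k = k' \<or> joined X1 k1 k2 \<or> joined X2 k1 k2" "joined X2 k' w"
    unfolding Mrel_def using A B by blast
  from c(4) show "(joined X1 u k1 \<and> joined X2 k1 w) \<or> (joined X1 u k2 \<and> joined X2 k2 w)"
  proof (elim disjE)
    assume "k = k'" then show ?thesis using c by auto
  next
    assume j: "joined X1 k1 k2"
    then have "joined X1 k k'" using c(1,2) by (auto simp: joined_commute)
    then have "joined X1 u k'" by (rule joined_trans[OF c(3)])
    then show ?thesis using c by auto
  next
    assume j: "joined X2 k1 k2"
    then have "joined X2 k k'" using c(1,2) by (auto simp: joined_commute)
    then have "joined X2 k w" by (rule joined_trans[OF _ c(5)])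
    then show ?thesis using c by auto
  qed
next
  assume h: "(joined X1 u k1 \<and> joined X2 k1 w) \<or> (joined X1 u k2 \<and> joined X2 k2 w)"
  have m1: "joined (X1 \<union> X2) p q" if "joined X1 p q" for p q using joined_mono[OF that, of "X1 \<union> X2"] by simp
  have m2: "joined (X1 \<union> X2) p q" if "joined X2 p q" for p q using joined_mono[OF that, of "X1 \<union> X2"] by simp
  from h obtain k where "joined X1 u k" "joined X2 k w" by blast
  then show "joined (X1 \<union> X2) u w"
    using joined_trans[OF m1 m2] by blast
qed

lemma cut_same_side:
  assumes W1: "\<Union>X1 \<subseteq> W1" and W2: "\<Union>X2 \<subseteq> W2" and K: "W1 \<inter> W2 \<subseteq> {k1, k2}"
    and u: "u \<in> W1" and w: "w \<in> W1"
  shows "joined (X1 \<union> X2) u w \<longleftrightarrow> joined X1 u w \<or>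
     (joined X2 k1 k2 \<and> ((joined X1 u k1 \<and> joined X1 k2 w) \<or> (joined X1 u k2 \<and> joined X1 k1 w)))"
proof
  assume h: "joined (X1 \<union> X2) u w"
  let ?J = "joined X2 k1 k2"
  let ?G = "(joined X1 u k1 \<and> joined X1 k2 w) \<or> (joined X1 u k2 \<and> joined X1 k1 w)"
  have Kd: "?J" if "p \<in> {k1,k2}" "q \<in> {k1,k2}" "p \<noteq> q" "joined X2 p q" for p q
    using that by (auto simp: joined_commute)
  have A: "\<exists>k0\<in>{k1,k2}. joined X1 u k0 \<and> (k0 = k \<or> ?J)" if "joined X1 u k \<or> joined X2 u k" "k \<in> {k1,k2}" for k
  proof (cases "joined X1 u k")
    case True then show ?thesis using that by auto
  next
    case False
    then have j2: "joined X2 u k" "u \<noteq> k" using that by auto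
    then have "u \<in> W2" using joined_vertex'[OF j2] W2 by auto
    then have "u \<in> {k1,k2}" using u K by auto
    then show ?thesis using Kd[OF _ that(2) j2(2) j2(1)] by auto
  qed
  have B: "\<exists>k0\<in>{k1,k2}. joined X1 k0 w \<and> (k0 = k \<or> ?J)" if "joined X1 k w \<or> joined X2 k w" "k \<in> {k1,k2}" for k
  proof (cases "joined X1 k w")
    case True then show ?thesis using that by auto
  next
    case False
    then have j2: "joined X2 k w" "k \<noteq> w" using that by auto
    then have "w \<in> W2" using joined_vertex[OF j2] W2 by auto
    then have "w \<in> {k1,k2}" using w K by auto
    then show ?thesis using Kd[OF that(2) _ j2(2) j2(1)] by auto
  qed
  have main: "joined X1 u w \<or> (?J \<and> ?G)"
    if mh: "k \<in> {k1,k2}" "k' \<in> {k1,k2}" "joined X1 u k" "joined X1 k' w" "k = k' \<or> joined X1 k1 k2 \<or> ?J" for k k'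
  proof -
    consider "k = k'" | "joined X1 k1 k2" | "?J" using mh(5) by blast
    then show ?thesis
    proof cases
      case 1 then have "joined X1 u w" using joined_trans[OF mh(3)] mh(4) by simp
      then show ?thesis by simp
    next
      case 2
      then have "joined X1 k k'" using mh(1,2) by (auto simp: joined_commute)
      then have "joined X1 u w" using joined_trans[OF joined_trans[OF mh(3)] mh(4)] by simp
      then show ?thesis by simp
    next
      case 3
      show ?thesis
      proof (cases "k = k'")
        case True then have "joined X1 u w" using joined_trans[OF mh(3)] mh(4) by simp
        then show ?thesis by simp
      next
        case False then show ?thesis using mh 3 by auto
      qed
    qed
  qed
  from joined_Mrel[OF h W1 W2 K] consider (a) "joined X1 u w" | (b) "joined X2 u w" |
     (c) k k' where "k \<in> {k1, k2}" "k' \<in> {k1, k2}" "joined X1 u k \<or> joined X2 u k"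
        "k = k' \<or> joined X1 k1 k2 \<or> ?J" "joined X1 k' w \<or> joined X2 k' w"
    unfolding Mrel_def by blast
  then show "joined X1 u w \<or> (?J \<and> ?G)"
  proof cases
    case a then show ?thesis by simp
  next
    case b
    show ?thesis
    proof (cases "u = w")
      case True then show ?thesis by simp
    next
      case False
      then have "u \<in> W2" "w \<in> W2" using joined_vertex[OF b False] joined_vertex'[OF b False] W2 by auto
      then have "u \<in> {k1,k2}" "w \<in> {k1,k2}" using u w K by auto
      then have "?J" using Kd False b by blast
      then show ?thesis using main[of u w] \<open>u \<in> {k1,k2}\<close> \<open>w \<in> {k1,k2}\<close> by auto
    qed
  next
    case c
    obtain k0 where k0: "k0 \<in> {k1,k2}" "joined X1 u k0" "k0 = k \<or> ?J" using A c by blast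
    obtain k0' where k0': "k0' \<in> {k1,k2}" "joined X1 k0' w" "k0' = k' \<or> ?J" using B c by blast
    have "k0 = k0' \<or> joined X1 k1 k2 \<or> ?J" using k0 k0' c by auto
    then show ?thesis using main[OF k0(1) k0'(1) k0(2) k0'(2)] by blast
  qed
next
  assume h: "joined X1 u w \<or>
     (joined X2 k1 k2 \<and> ((joined X1 u k1 \<and> joined X1 k2 w) \<or> (joined X1 u k2 \<and> joined X1 k1 w)))"
  have m1: "joined (X1 \<union> X2) p q" if "joined X1 p q" for p q using joined_mono[OF that, of "X1 \<union> X2"] by simp
  have m2: "joined (X1 \<union> X2) p q" if "joined X2 p q" for p q using joined_mono[OF that, of "X1 \<union> X2"] by simp
  have j: "joined (X1 \<union> X2) k2 k1" if "joined X2 k1 k2" using m2[OF joined_sym[OF that]] .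
  from h show "joined (X1 \<union> X2) u w"
  proof (elim disjE conjE)
    assume "joined X1 u w" then show ?thesis using m1 by blast
  next
    assume a: "joined X2 k1 k2" "joined X1 u k1" "joined X1 k2 w"
    then show ?thesis using joined_trans[OF joined_trans[OF m1[OF a(2)] m2[OF a(1)]] m1[OF a(3)]] by simp
  next
    assume a: "joined X2 k1 k2" "joined X1 u k2" "joined X1 k1 w"
    then show ?thesis using joined_trans[OF joined_trans[OF m1[OF a(2)] j[OF a(1)]] m1[OF a(3)]] by simp
  qed
qed




definition blift :: "('a \<Rightarrow> 'b) \<Rightarrow> 'a \<times> bool \<Rightarrow> 'b \<times> bool" where
  "blift h = (\<lambda>(v, s). (h v, s))"

lemma blift_simp[simp]: "blift h (v, s) = (h v, s)"
  by (simp add: blift_def)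

lemma inj_lift: "inj h \<Longrightarrow> inj (blift h)"
  by (auto simp: inj_def blift_def)

lemma inj_image_fun: "inj h \<Longrightarrow> inj (\<lambda>e. h ` e)"
  by (simp add: inj_def inj_image_eq_iff)

lemma image_doubleton_inv:
  assumes "inj h" "{x', y'} = h ` e"
  shows "\<exists>x y. x' = h x \<and> y' = h y \<and> e = {x, y}"
proof -
  have "x' \<in> h ` e" "y' \<in> h ` e" using assms(2) by auto
  then obtain x y where xy: "x \<in> e" "x' = h x" "y \<in> e" "y' = h y" by blast
  have "e \<subseteq> {x, y}"
  proof
    fix z assume "z \<in> e"
    then have "h z \<in> {h x, h y}" using assms(2) xy by auto
    then show "z \<in> {x, y}" using assms(1) by (auto dest: injD)
  qed
  then have "e = {x, y}" using xy by auto
  then show ?thesis using xy by blast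
qed

lemma bb_h: "{x, y} \<in> E \<Longrightarrow> {(x, s), (y, s)} \<in> bb_edges V E"
  unfolding bb_edges_def by blast

lemma bb_v: "x \<in> V \<Longrightarrow> {(x, False), (x, True)} \<in> bb_edges V E"
  unfolding bb_edges_def by blast

lemma bb_cases:
  assumes "e \<in> bb_edges V E"
  obtains (h) x y s where "e = {(x, s), (y, s)}" "{x, y} \<in> E"
    | (v) x where "e = {(x, False), (x, True)}" "x \<in> V"
  using assms unfolding bb_edges_def by blast

lemma bb_edges_image:
  assumes "inj h"
  shows "(\<lambda>e. blift h ` e) ` bb_edges V E = bb_edges (h ` V) ((\<lambda>e. h ` e) ` E)"
proof
  show "(\<lambda>e. blift h ` e) ` bb_edges V E \<subseteq> bb_edges (h ` V) ((\<lambda>e. h ` e) ` E)"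
  proof
    fix e' assume "e' \<in> (\<lambda>e. blift h ` e) ` bb_edges V E"
    then obtain e where e: "e \<in> bb_edges V E" "e' = blift h ` e" by blast
    from e(1) show "e' \<in> bb_edges (h ` V) ((\<lambda>e. h ` e) ` E)"
    proof (cases rule: bb_cases)
      case (h x y s)
      have "h ` {x, y} \<in> (\<lambda>e. h ` e) ` E" using h(2) by (rule imageI)
      then have "{h x, h y} \<in> (\<lambda>e. h ` e) ` E" by simp
      moreover have "e' = {(h x, s), (h y, s)}" using e(2) h(1) by simp
      ultimately show ?thesis by (simp add: bb_h)
    next
      case (v x)
      then have "e' = {(h x, False), (h x, True)}" "h x \<in> h ` V" using e(2) by auto
      then show ?thesis by (simp add: bb_v)
    qed
  qed
next
  show "bb_edges (h ` V) ((\<lambda>e. h ` e) ` E) \<subseteq> (\<lambda>e. blift h ` e) ` bb_edges V E"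
  proof
    fix e' assume "e' \<in> bb_edges (h ` V) ((\<lambda>e. h ` e) ` E)"
    then show "e' \<in> (\<lambda>e. blift h ` e) ` bb_edges V E"
    proof (cases rule: bb_cases)
      case (h x' y' s)
      then obtain e where e: "e \<in> E" "{x', y'} = h ` e" by blast
      obtain x y where xy: "x' = h x" "y' = h y" "e = {x, y}" using image_doubleton_inv[OF assms e(2)] by blast
      have "{(x, s), (y, s)} \<in> bb_edges V E" using e(1) xy(3) by (simp add: bb_h)
      moreover have "e' = blift h ` {(x, s), (y, s)}" using h xy by simp
      ultimately show ?thesis by (rule rev_image_eqI)
    next
      case (v x')
      then obtain x where x: "x \<in> V" "x' = h x" by blast
      have "{(x, False), (x, True)} \<in> bb_edges V E" using x(1) by (rule bb_v)
      moreover have "e' = blift h ` {(x, False), (x, True)}" using v x by simp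
      ultimately show ?thesis by (rule rev_image_eqI)
    qed
  qed
qed

lemma bb_edges_union: "bb_edges (V1 \<union> V2) (E1 \<union> E2) = bb_edges V1 E1 \<union> bb_edges V2 E2"
proof
  show "bb_edges (V1 \<union> V2) (E1 \<union> E2) \<subseteq> bb_edges V1 E1 \<union> bb_edges V2 E2"
  proof
    fix e assume "e \<in> bb_edges (V1 \<union> V2) (E1 \<union> E2)"
    then show "e \<in> bb_edges V1 E1 \<union> bb_edges V2 E2"
    proof (cases rule: bb_cases)
      case (h x y s) then show ?thesis using bb_h[of x y E1 s V1] bb_h[of x y E2 s V2] by auto
    next
      case (v x) then show ?thesis using bb_v[of x V1 E1] bb_v[of x V2 E2] by auto
    qed
  qed
  show "bb_edges V1 E1 \<union> bb_edges V2 E2 \<subseteq> bb_edges (V1 \<union> V2) (E1 \<union> E2)"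
  proof
    fix e assume "e \<in> bb_edges V1 E1 \<union> bb_edges V2 E2"
    then consider "e \<in> bb_edges V1 E1" | "e \<in> bb_edges V2 E2" by blast
    then show "e \<in> bb_edges (V1 \<union> V2) (E1 \<union> E2)"
    proof cases
      case 1 then show ?thesis
      proof (cases rule: bb_cases)
        case (h x y s) then show ?thesis using bb_h[of x y "E1 \<union> E2" s "V1 \<union> V2"] by auto
      next
        case (v x) then show ?thesis using bb_v[of x "V1 \<union> V2" "E1 \<union> E2"] by auto
      qed
    next
      case 2 then show ?thesis
      proof (cases rule: bb_cases)
        case (h x y s) then show ?thesis using bb_h[of x y "E1 \<union> E2" s "V1 \<union> V2"] by auto
      next
        case (v x) then show ?thesis using bb_v[of x "V1 \<union> V2" "E1 \<union> E2"] by auto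
      qed
    qed
  qed
qed

lemma bb_edges_finite:
  assumes "simple_graph V E" shows "finite (bb_edges V E)"
proof -
  have fV: "finite V" using assms by (simp add: simple_graph_def)
  have sg: "\<forall>e\<in>E. \<exists>x y. x \<in> V \<and> y \<in> V \<and> x \<noteq> y \<and> e = {x, y}" using assms by (simp add: simple_graph_def)
  let ?H = "(\<lambda>(x, y, s). {(x, s), (y, s)}) ` (V \<times> V \<times> (UNIV :: bool set))"
  let ?V = "(\<lambda>x. {(x, False), (x, True)}) ` V"
  have "bb_edges V E \<subseteq> ?H \<union> ?V"
  proof
    fix e assume "e \<in> bb_edges V E"
    then show "e \<in> ?H \<union> ?V"
    proof (cases rule: bb_cases)
      case (h x y s)
      obtain p q where "p \<in> V" "q \<in> V" "{x, y} = {p, q}" using sg h(2) by blast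
      then have "x \<in> V" "y \<in> V" by (auto simp: doubleton_eq_iff)
      then have "(x, y, s) \<in> V \<times> V \<times> UNIV" by simp
      then have "e \<in> ?H" by (rule rev_image_eqI) (simp add: h(1))
      then show ?thesis by simp
    next
      case (v x) then show ?thesis by simp
    qed
  qed
  moreover have "finite (?H \<union> ?V)" using fV by simp
  ultimately show ?thesis by (rule finite_subset)
qed

definition bflip :: "'a \<times> bool \<Rightarrow> 'a \<times> bool" where
  "bflip = (\<lambda>(v, s). (v, \<not> s))"

lemma bflip_simp[simp]: "bflip (v, s) = (v, \<not> s)"
  by (simp add: bflip_def)

lemma inj_flip: "inj bflip"
  by (auto simp: inj_def bflip_def)

lemma bflip_flip[simp]: "bflip (bflip p) = p"
  by (cases p) simp

lemma bb_flip_sub: "(\<lambda>e. bflip ` e) ` bb_edges V E \<subseteq> bb_edges V E"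
proof
  fix e' assume "e' \<in> (\<lambda>e. bflip ` e) ` bb_edges V E"
  then obtain e where e: "e \<in> bb_edges V E" "e' = bflip ` e" by blast
  from e(1) show "e' \<in> bb_edges V E"
  proof (cases rule: bb_cases)
    case (h x y s)
    then have "e' = {(x, \<not> s), (y, \<not> s)}" using e by simp
    then show ?thesis using h by (simp add: bb_h)
  next
    case (v x)
    then have "e' = {(x, False), (x, True)}" using e by auto
    then show ?thesis using v by (simp add: bb_v)
  qed
qed

lemma bb_flip: "(\<lambda>e. bflip ` e) ` bb_edges V E = bb_edges V E"
proof
  show "(\<lambda>e. bflip ` e) ` bb_edges V E \<subseteq> bb_edges V E" by (rule bb_flip_sub)
  show "bb_edges V E \<subseteq> (\<lambda>e. bflip ` e) ` bb_edges V E"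
  proof
    fix e assume "e \<in> bb_edges V E"
    moreover have "e = bflip ` (bflip ` e)" by (simp add: image_image)
    moreover have "bflip ` e \<in> bb_edges V E" using bb_flip_sub \<open>e \<in> bb_edges V E\<close> by blast
    ultimately show "e \<in> (\<lambda>e. bflip ` e) ` bb_edges V E" by blast
  qed
qed

lemma wt_nonneg: "(\<And>e. e \<in> E \<Longrightarrow> 0 \<le> mu e \<and> mu e \<le> 1) \<Longrightarrow> X \<subseteq> E \<Longrightarrow> 0 \<le> wt E mu X"
  unfolding wt_def by (intro mult_nonneg_nonneg prod_nonneg) auto

lemma PEx_mono:
  assumes "\<And>e. e \<in> E \<Longrightarrow> 0 \<le> mu e \<and> mu e \<le> 1" "\<And>X. X \<subseteq> E \<Longrightarrow> f X \<le> g X"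
  shows "PEx E mu f \<le> PEx E mu g"
  unfolding PEx_def using wt_nonneg[OF assms(1)] assms(2)
  by (intro sum_mono mult_left_mono) auto

lemma PEx_bounds:
  assumes "finite E" "\<And>e. e \<in> E \<Longrightarrow> 0 \<le> mu e \<and> mu e \<le> 1" "\<And>X. 0 \<le> f X \<and> f X \<le> 1"
  shows "0 \<le> PEx E mu f" "PEx E mu f \<le> 1"
proof -
  have "PEx E mu (\<lambda>_. 0) \<le> PEx E mu f" by (rule PEx_mono[OF assms(2)]) (use assms(3) in auto)
  then show "0 \<le> PEx E mu f" by (simp add: PEx_def)
  have "PEx E mu f \<le> PEx E mu (\<lambda>_. 1)" by (rule PEx_mono[OF assms(2)]) (use assms(3) in auto)
  then show "PEx E mu f \<le> 1" using PEx_one[OF assms(1)] by simp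
qed




lemma perc_prob_Ex':
  "finite E \<Longrightarrow> perc_prob E mu P = PEx E mu (\<lambda>X. of_bool (P X))"
  using perc_prob_Ex[of E mu P] by (simp add: of_bool_def)

lemma PEx_insert_weight1:
  assumes "finite E" "e \<in> E"
  shows "PEx E mu (\<lambda>X. h (insert e X)) = PEx E (mu(e := 1)) h"
proof -
  have "PEx E (mu(e := 1)) h = PEx (E - {e}) (mu(e := 1)) (\<lambda>X. h (insert e X))"
    by (rule PEx_weight1[OF assms]) simp
  also have "\<dots> = PEx (E - {e}) mu (\<lambda>X. h (insert e X))"
    by (rule PEx_cong) auto
  also have "\<dots> = PEx E mu (\<lambda>X. h (insert e X))"
    by (subst PEx_remove[OF assms]) (simp add: algebra_simps)
  finally show ?thesis by simp
qed

lemma PEx_remove_weight0: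
  assumes "finite E" "e \<in> E"
  shows "PEx (E - {e}) mu h = PEx E (mu(e := 0)) h"
proof -
  have "PEx E (mu(e := 0)) h = PEx (E - {e}) (mu(e := 0)) h"
    by (rule PEx_weight0[OF assms]) simp
  also have "\<dots> = PEx (E - {e}) mu h"
    by (rule PEx_cong) auto
  finally show ?thesis by simp
qed

locale glue =
  fixes VA :: "'p set" and EA :: "'p set set" and VB :: "'q set" and EB :: "'q set set"
    and f :: "'p \<Rightarrow> 'v" and g :: "'q \<Rightarrow> 'v" and a :: 'p and b :: 'q
  assumes sgA: "simple_graph VA EA" and sgB: "simple_graph VB EB"
    and aA: "a \<in> VA" and bB: "b \<in> VB"
    and inj_f: "inj f" and inj_g: "inj g"
    and fg: "f a = g b" and fg2: "\<And>x y. f x = g y \<Longrightarrow> x = a \<and> y = b"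
    and bbA: "bunkbed VA EA" and bbB: "bunkbed VB EB"
begin

definition "VD = f ` VA \<union> g ` VB"
definition "ED = (\<lambda>e. f ` e) ` EA \<union> (\<lambda>e. g ` e) ` EB"
definition "EF = (\<lambda>e. blift f ` e) ` bb_edges VA EA"
definition "EG = (\<lambda>e. blift g ` e) ` bb_edges VB EB"
definition "c = f a"
definition "vc = {(c, False), (c, True)}"

lemma bbD: "bb_edges VD ED = EF \<union> EG"
  unfolding VD_def ED_def EF_def EG_def bb_edges_union
  using bb_edges_image[OF inj_f] bb_edges_image[OF inj_g] by simp

lemma fin_EF: "finite EF" unfolding EF_def using bb_edges_finite[OF sgA] by simp
lemma fin_EG: "finite EG" unfolding EG_def using bb_edges_finite[OF sgB] by simp

lemma vc_EF: "vc \<in> EF"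
proof -
  have "{(a, False), (a, True)} \<in> bb_edges VA EA" using aA by (rule bb_v)
  moreover have "vc = blift f ` {(a, False), (a, True)}" by (simp add: vc_def c_def)
  ultimately show ?thesis unfolding EF_def by (rule rev_image_eqI)
qed

lemma vc_EG: "vc \<in> EG"
proof -
  have "{(b, False), (b, True)} \<in> bb_edges VB EB" using bB by (rule bb_v)
  moreover have "vc = blift g ` {(b, False), (b, True)}" by (simp add: vc_def c_def fg)
  ultimately show ?thesis unfolding EG_def by (rule rev_image_eqI)
qed

lemma UEF: "\<Union>EF \<subseteq> range (blift f)" unfolding EF_def by auto
lemma UEG: "\<Union>EG \<subseteq> range (blift g)" unfolding EG_def by auto

lemma rangeK: "range (blift f) \<inter> range (blift g) \<subseteq> {(c, False), (c, True)}"
proof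
  fix p assume "p \<in> range (blift f) \<inter> range (blift g)"
  then obtain q q' where "p = blift f q" "p = blift g q'" by blast
  moreover obtain x s where "q = (x, s)" by (cases q)
  moreover obtain y t where "q' = (y, t)" by (cases q')
  ultimately have "p = (f x, s)" "p = (g y, t)" by auto
  then have "f x = g y" "s = t" by auto
  then have "x = a" using fg2 by blast
  then have "p = (c, s)" using \<open>p = (f x, s)\<close> by (simp add: c_def)
  then show "p \<in> {(c, False), (c, True)}" by (cases s) auto
qed

lemma EF_EG: "EF \<inter> EG \<subseteq> {vc}"
proof
  fix e assume e: "e \<in> EF \<inter> EG"
  then have sub: "e \<subseteq> {(c, False), (c, True)}" using UEF UEG rangeK by blast
  from e obtain e0 where e0: "e0 \<in> bb_edges VA EA" "e = blift f ` e0" unfolding EF_def by blast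
  from e0(1) show "e \<in> {vc}"
  proof (cases rule: bb_cases)
    case (h x y s)
    then have "(f x, s) \<in> e" "(f y, s) \<in> e" using e0 by auto
    then have "f x = c" "f y = c" using sub by auto
    then have "x = y" using inj_f by (metis injD)
    moreover have "\<forall>e\<in>EA. \<exists>x y. x \<in> VA \<and> y \<in> VA \<and> x \<noteq> y \<and> e = {x, y}"
      using sgA by (simp add: simple_graph_def)
    ultimately have False using h(2) by (auto simp: doubleton_eq_iff)
    then show ?thesis ..
  next
    case (v x)
    then have "(f x, False) \<in> e" using e0 by auto
    then have "f x = c" using sub by auto
    then show ?thesis using e0 v by (simp add: vc_def)
  qed
qed

definition "E2 = EG - {vc}"

lemma bbD2: "bb_edges VD ED = EF \<union> E2" and disj: "EF \<inter> E2 = {}" and fin_E2: "finite E2"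
  using bbD EF_EG vc_EF fin_EG unfolding E2_def by auto

lemma UE2: "\<Union>E2 \<subseteq> range (blift g)" using UEG unfolding E2_def by auto

lemma sw_lift:
  assumes sw: "symmetric_weight VD ED mu" and r: "0 \<le> r" "r \<le> 1"
  shows "symmetric_weight VA EA ((mu(vc := r)) \<circ> (\<lambda>e. blift f ` e))"
  unfolding symmetric_weight_def
proof (intro conjI ballI allI impI)
  fix e assume e: "e \<in> bb_edges VA EA"
  then have "blift f ` e \<in> bb_edges VD ED" unfolding bbD EF_def by blast
  then have "0 \<le> mu (blift f ` e) \<and> mu (blift f ` e) \<le> 1" using sw unfolding symmetric_weight_def by blast
  then show "0 \<le> ((mu(vc := r)) \<circ> (\<lambda>e. blift f ` e)) e" "((mu(vc := r)) \<circ> (\<lambda>e. blift f ` e)) e \<le> 1"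
    using r by auto
next
  fix x y assume xy: "{x, y} \<in> EA"
  have "f ` {x, y} \<in> (\<lambda>e. f ` e) ` EA" using xy by (rule imageI)
  then have "{f x, f y} \<in> ED" unfolding ED_def by simp
  then have eq: "mu {(f x, False), (f y, False)} = mu {(f x, True), (f y, True)}"
    using sw unfolding symmetric_weight_def by blast
  have n1: "{(f x, False), (f y, False)} \<noteq> vc" unfolding vc_def by (auto simp: doubleton_eq_iff)
  have n2: "{(f x, True), (f y, True)} \<noteq> vc" unfolding vc_def by (auto simp: doubleton_eq_iff)
  show "((mu(vc := r)) \<circ> (\<lambda>e. blift f ` e)) {(x, False), (y, False)} = ((mu(vc := r)) \<circ> (\<lambda>e. blift f ` e)) {(x, True), (y, True)}"
    using eq n1 n2 by simp
qed

lemma PEx_EF_transport: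
  "PEx EF nu (\<lambda>X. of_bool (joined X (f x0, s) (f y0, t))) =
   perc_prob (bb_edges VA EA) (nu \<circ> (\<lambda>e. blift f ` e)) (\<lambda>X. joined X (x0, s) (y0, t))"
proof -
  have inj: "inj_on (\<lambda>e. blift f ` e) (bb_edges VA EA)"
    using inj_image_fun[OF inj_lift[OF inj_f]] by (simp add: inj_on_def inj_def)
  have "PEx EF nu (\<lambda>X. of_bool (joined X (f x0, s) (f y0, t))) =
        PEx (bb_edges VA EA) (nu \<circ> (\<lambda>e. blift f ` e))
          (\<lambda>X. of_bool (joined ((\<lambda>e. blift f ` e) ` X) (blift f (x0, s)) (blift f (y0, t))))"
    unfolding EF_def by (subst PEx_reindex[OF inj]) simp
  also have "\<dots> = PEx (bb_edges VA EA) (nu \<circ> (\<lambda>e. blift f ` e)) (\<lambda>X. of_bool (joined X (x0, s) (y0, t)))"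
    by (simp only: joined_image[OF inj_lift[OF inj_f]])
  also have "\<dots> = perc_prob (bb_edges VA EA) (nu \<circ> (\<lambda>e. blift f ` e)) (\<lambda>X. joined X (x0, s) (y0, t))"
    by (rule perc_prob_Ex'[OF bb_edges_finite[OF sgA], symmetric])
  finally show ?thesis .
qed

lemma A_ineq:
  assumes sw: "symmetric_weight VD ED mu" and r: "0 \<le> r" "r \<le> 1" and x0: "x0 \<in> VA" and y0: "y0 \<in> VA"
  shows "PEx EF (mu(vc := r)) (\<lambda>X. of_bool (joined X (f x0, False) (f y0, True)))
       \<le> PEx EF (mu(vc := r)) (\<lambda>X. of_bool (joined X (f x0, False) (f y0, False)))"
  unfolding PEx_EF_transport
  using bbA sw_lift[OF sw r] x0 y0 unfolding bunkbed_def by blast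

end




lemma bflip_lift: "bflip (blift h p) = blift h (bflip p)"
  by (cases p) simp

lemma joined_flip: "joined ((\<lambda>e. bflip ` e) ` X) p q = joined X (bflip p) (bflip q)"
  using joined_image[OF inj_flip, of X "bflip p" "bflip q"] by simp

lemma of_bool_or_and:
  "(of_bool ((P1 \<and> Q1) \<or> (P2 \<and> Q2)) :: real) =
   of_bool P1 * of_bool Q1 + of_bool P2 * of_bool Q2 - of_bool (P1 \<and> P2) * of_bool (Q1 \<and> Q2)"
  by (cases P1; cases P2; cases Q1; cases Q2) simp_all

lemma of_bool_or_split:
  "(of_bool (P \<or> (Q \<and> G)) :: real) = of_bool P * 1 + of_bool (G \<and> \<not> P) * of_bool Q"
  by (cases P; cases Q; cases G) simp_all

lemma of_bool_or_split2:
  "(of_bool P :: real) + of_bool (G \<and> \<not> P) = of_bool (P \<or> G)"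
  by (cases P; cases G) simp_all

context glue
begin

lemma mu_bounds_E2:
  assumes sw: "symmetric_weight VD ED mu"
  shows "\<And>e. e \<in> E2 \<Longrightarrow> 0 \<le> mu e \<and> mu e \<le> 1"
  using sw bbD2 unfolding symmetric_weight_def by blast

lemma mu_bounds_EF:
  assumes sw: "symmetric_weight VD ED mu"
  shows "\<And>e. e \<in> EF \<Longrightarrow> 0 \<le> mu e \<and> mu e \<le> 1"
  using sw bbD2 unfolding symmetric_weight_def by blast

lemma PEx_E2_flip:
  assumes sw: "symmetric_weight VD ED mu"
  shows "PEx E2 mu h = PEx E2 mu (\<lambda>X. h ((\<lambda>e. bflip ` e) ` X))"
proof -
  let ?P = "\<lambda>e. bflip ` e"
  have c1: "?P \<circ> (\<lambda>e. blift g ` e) = (\<lambda>e. blift g ` e) \<circ> ?P"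
    by (rule ext) (simp add: image_image bflip_lift)
  have "?P ` EG = (\<lambda>e. blift g ` e) ` (?P ` bb_edges VB EB)"
    unfolding EG_def by (simp only: image_comp c1)
  then have PEG: "?P ` EG = EG" unfolding bb_flip EG_def .
  have Pvc: "?P vc = vc" unfolding vc_def by auto
  have injP: "inj ?P" by (rule inj_image_fun[OF inj_flip])
  have PE2: "?P ` E2 = E2"
    unfolding E2_def using PEG Pvc by (simp add: image_set_diff[OF injP])
  have "PEx E2 mu h = PEx (?P ` E2) mu h" using PE2 by simp
  also have "\<dots> = PEx E2 (mu \<circ> ?P) (\<lambda>X. h (?P ` X))"
    by (rule PEx_reindex[OF inj_on_subset[OF injP subset_UNIV]])
  also have "\<dots> = PEx E2 mu (\<lambda>X. h (?P ` X))"
  proof (rule PEx_cong)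
    fix e assume "e \<in> E2"
    then have "e \<in> bb_edges VD ED" using bbD2 by auto
    then show "(mu \<circ> ?P) e = mu e"
    proof (cases rule: bb_cases)
      case (h x y s)
      have "mu {(x, False), (y, False)} = mu {(x, True), (y, True)}"
        using sw h(2) unfolding symmetric_weight_def by blast
      then show ?thesis using h(1) by (cases s) auto
    next
      case (v x)
      then have "?P e = e" by auto
      then show ?thesis by simp
    qed
  qed simp
  finally show ?thesis .
qed

lemma half_same:
  assumes sw: "symmetric_weight VD ED mu" and x0: "x0 \<in> VA" and y0: "y0 \<in> VA"
  shows "perc_prob (bb_edges VD ED) mu (\<lambda>X. joined X (f x0, False) (f y0, True))
       \<le> perc_prob (bb_edges VD ED) mu (\<lambda>X. joined X (f x0, False) (f y0, False))"
proof -
  define u where "u = (f x0, False)"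
  define k1 where "k1 = (c, False)"
  define k2 where "k2 = (c, True)"
  define G where "G t X = ((joined X u k1 \<and> joined X k2 (f y0, t)) \<or> (joined X u k2 \<and> joined X k1 (f y0, t)))" for t X
  define A where "A t = PEx EF mu (\<lambda>X. of_bool (joined X u (f y0, t)))" for t
  define B where "B t = PEx EF mu (\<lambda>X. of_bool (G t X \<and> \<not> joined X u (f y0, t)))" for t
  define p where "p = PEx E2 mu (\<lambda>X. of_bool (joined X k1 k2))"
  have fin: "finite (bb_edges VD ED)" using fin_EF fin_E2 bbD2 by simp
  have K: "range (blift f) \<inter> range (blift g) \<subseteq> {k1, k2}" using rangeK unfolding k1_def k2_def .
  have uW: "u \<in> range (blift f)" unfolding u_def by (metis blift_simp rangeI)
  have wW: "(f y0, t) \<in> range (blift f)" for t by (metis blift_simp rangeI)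
  have P: "perc_prob (bb_edges VD ED) mu (\<lambda>X. joined X u (f y0, t)) = A t + p * B t" for t
  proof -
    have "perc_prob (bb_edges VD ED) mu (\<lambda>X. joined X u (f y0, t))
        = PEx (EF \<union> E2) mu (\<lambda>X. of_bool (joined X u (f y0, t)))"
      using perc_prob_Ex'[OF fin] bbD2 by simp
    also have "\<dots> = PEx (EF \<union> E2) mu (\<lambda>X. of_bool (joined (X \<inter> EF) u (f y0, t)) * (\<lambda>_. 1) (X \<inter> E2)
                + of_bool (G t (X \<inter> EF) \<and> \<not> joined (X \<inter> EF) u (f y0, t)) * of_bool (joined (X \<inter> E2) k1 k2))"
    proof (rule PEx_cong[OF refl])
      fix X assume X: "X \<subseteq> EF \<union> E2"
      then have XX: "X = (X \<inter> EF) \<union> (X \<inter> E2)" by auto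
      have W1: "\<Union>(X \<inter> EF) \<subseteq> range (blift f)" using UEF by auto
      have W2: "\<Union>(X \<inter> E2) \<subseteq> range (blift g)" using UE2 by auto
      have "joined X u (f y0, t) \<longleftrightarrow> joined (X \<inter> EF) u (f y0, t) \<or>
         (joined (X \<inter> E2) k1 k2 \<and> G t (X \<inter> EF))"
        using cut_same_side[OF W1 W2 K uW wW] XX unfolding G_def by metis
      then show "(of_bool (joined X u (f y0, t)) :: real) = of_bool (joined (X \<inter> EF) u (f y0, t)) * (\<lambda>_. 1) (X \<inter> E2)
                + of_bool (G t (X \<inter> EF) \<and> \<not> joined (X \<inter> EF) u (f y0, t)) * of_bool (joined (X \<inter> E2) k1 k2)"
        by (cases "joined (X \<inter> EF) u (f y0, t)"; cases "joined (X \<inter> E2) k1 k2"; cases "G t (X \<inter> EF)") simp_all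
    qed
    also have "\<dots> = A t * PEx E2 mu (\<lambda>_. 1) + B t * p"
    proof -
      have e1: "PEx (EF \<union> E2) mu (\<lambda>X. of_bool (joined (X \<inter> EF) u (f y0, t)) * (\<lambda>_. 1) (X \<inter> E2)) = A t * PEx E2 mu (\<lambda>_. 1)"
        unfolding A_def by (rule PEx_prod[OF fin_EF fin_E2 disj, where f = "\<lambda>X. of_bool (joined X u (f y0, t))" and g = "\<lambda>_. 1"])
      have e2: "PEx (EF \<union> E2) mu (\<lambda>X. of_bool (G t (X \<inter> EF) \<and> \<not> joined (X \<inter> EF) u (f y0, t)) * of_bool (joined (X \<inter> E2) k1 k2)) = B t * p"
        unfolding B_def p_def by (rule PEx_prod[OF fin_EF fin_E2 disj, where f = "\<lambda>X. of_bool (G t X \<and> \<not> joined X u (f y0, t))" and g = "\<lambda>X. of_bool (joined X k1 k2)"])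
      show ?thesis unfolding PEx_add using e1 e2 by simp
    qed
    also have "\<dots> = A t + p * B t" using PEx_one[OF fin_E2] by simp
    finally show ?thesis .
  qed
  have AB: "A t + B t = PEx EF (mu(vc := 1)) (\<lambda>X. of_bool (joined X u (f y0, t)))" for t
  proof -
    have "A t + B t = PEx EF mu (\<lambda>X. of_bool (joined X u (f y0, t) \<or> G t X))"
      unfolding A_def B_def PEx_add[symmetric] of_bool_or_split2 ..
    also have "\<dots> = PEx EF mu (\<lambda>X. of_bool (joined (insert vc X) u (f y0, t)))"
    proof (rule PEx_cong[OF refl])
      fix X assume X: "X \<subseteq> EF"
      have W1: "\<Union>X \<subseteq> range (blift f)" using UEF X by auto
      have W2: "\<Union>{vc} \<subseteq> {k1, k2}" unfolding vc_def k1_def k2_def by auto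
      have K': "range (blift f) \<inter> {k1, k2} \<subseteq> {k1, k2}" by auto
      have j: "joined {vc} k1 k2" unfolding vc_def k1_def k2_def by (rule joined_edge) simp
      have "joined (X \<union> {vc}) u (f y0, t) \<longleftrightarrow> joined X u (f y0, t) \<or> G t X"
        using cut_same_side[OF W1 W2 K' uW wW] j unfolding G_def by metis
      then show "(of_bool (joined X u (f y0, t) \<or> G t X) :: real) = of_bool (joined (insert vc X) u (f y0, t))"
        by simp
    qed
    also have "\<dots> = PEx EF (mu(vc := 1)) (\<lambda>X. of_bool (joined X u (f y0, t)))"
      by (rule PEx_insert_weight1[OF fin_EF vc_EF])
    finally show ?thesis .
  qed
  have mu01: "0 \<le> mu vc" "mu vc \<le> 1" using mu_bounds_EF[OF sw vc_EF] by auto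
  have A1: "A True \<le> A False"
    using A_ineq[OF sw mu01 x0 y0] unfolding A_def u_def by simp
  have A2: "A True + B True \<le> A False + B False"
    using A_ineq[OF sw _ _ x0 y0, of 1] unfolding AB u_def by simp
  have p01: "0 \<le> p" "p \<le> 1" unfolding p_def
    using PEx_bounds[OF fin_E2 mu_bounds_E2[OF sw]] by auto
  have e: "A False + p * B False - (A True + p * B True)
      = (1 - p) * (A False - A True) + p * ((A False + B False) - (A True + B True))"
    by (simp add: algebra_simps)
  have "0 \<le> (1 - p) * (A False - A True)" using A1 p01 by simp
  moreover have "0 \<le> p * ((A False + B False) - (A True + B True))" using A2 p01 by simp
  ultimately have "A True + p * B True \<le> A False + p * B False" using e by linarith
  then show ?thesis using P unfolding u_def by simp
qed


lemma half_other:
  assumes sw: "symmetric_weight VD ED mu" and x0: "x0 \<in> VA" and nx: "f x0 \<notin> range g"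
    and y0: "y0 \<in> VB" and ny: "g y0 \<notin> range f"
  shows "perc_prob (bb_edges VD ED) mu (\<lambda>X. joined X (f x0, False) (g y0, True))
       \<le> perc_prob (bb_edges VD ED) mu (\<lambda>X. joined X (f x0, False) (g y0, False))"
proof -
  interpret sw: glue VB EB VA EA g f b a
  proof unfold_locales
    fix x y assume "g x = f y" then show "x = b \<and> y = a" using fg2[of y x] by simp
  qed (use sgA sgB aA bB inj_f inj_g fg bbA bbB in simp_all)
  have swVD: "sw.VD = VD" unfolding sw.VD_def VD_def by auto
  have swED: "sw.ED = ED" unfolding sw.ED_def ED_def by auto
  have swEF: "sw.EF = EG" unfolding sw.EF_def EG_def ..
  have swc: "sw.c = c" unfolding sw.c_def c_def using fg by simp
  have swvc: "sw.vc = vc" unfolding sw.vc_def vc_def swc ..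
  have sw': "symmetric_weight sw.VD sw.ED mu" using sw swVD swED by simp
  define u where "u = (f x0, False)"
  define k1 where "k1 = (c, False)"
  define k2 where "k2 = (c, True)"
  define al1 where "al1 = PEx EF mu (\<lambda>X. of_bool (joined X u k1))"
  define al2 where "al2 = PEx EF mu (\<lambda>X. of_bool (joined X u k2))"
  define al12 where "al12 = PEx EF mu (\<lambda>X. of_bool (joined X u k1 \<and> joined X u k2))"
  define be1 where "be1 t = PEx E2 mu (\<lambda>X. of_bool (joined X k1 (g y0, t)))" for t
  define be2 where "be2 t = PEx E2 mu (\<lambda>X. of_bool (joined X k2 (g y0, t)))" for t
  define be12 where "be12 t = PEx E2 mu (\<lambda>X. of_bool (joined X k1 (g y0, t) \<and> joined X k2 (g y0, t)))" for t
  have fin: "finite (bb_edges VD ED)" using fin_EF fin_E2 bbD2 by simp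
  have K: "range (blift f) \<inter> range (blift g) \<subseteq> {k1, k2}" using rangeK unfolding k1_def k2_def .
  have uW: "u \<in> range (blift f)" unfolding u_def by (metis blift_simp rangeI)
  have uW2: "u \<notin> range (blift g)"
  proof
    assume "u \<in> range (blift g)"
    then obtain q where "u = blift g q" by blast
    then obtain y s where "u = (g y, s)" by (cases q) auto
    then show False using nx unfolding u_def by auto
  qed
  have wW: "(g y0, t) \<notin> range (blift f)" for t
  proof
    assume "(g y0, t) \<in> range (blift f)"
    then obtain q where "(g y0, t) = blift f q" by blast
    then obtain y s where "(g y0, t) = (f y, s)" by (cases q) auto
    then show False using ny by auto
  qed
  have P: "perc_prob (bb_edges VD ED) mu (\<lambda>X. joined X u (g y0, t)) = al1 * be1 t + al2 * be2 t - al12 * be12 t" for t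
  proof -
    have "perc_prob (bb_edges VD ED) mu (\<lambda>X. joined X u (g y0, t))
        = PEx (EF \<union> E2) mu (\<lambda>X. of_bool (joined X u (g y0, t)))"
      using perc_prob_Ex'[OF fin] bbD2 by simp
    also have "\<dots> = PEx (EF \<union> E2) mu (\<lambda>X. of_bool (joined (X \<inter> EF) u k1) * of_bool (joined (X \<inter> E2) k1 (g y0, t))
         + of_bool (joined (X \<inter> EF) u k2) * of_bool (joined (X \<inter> E2) k2 (g y0, t))
         - of_bool (joined (X \<inter> EF) u k1 \<and> joined (X \<inter> EF) u k2) * of_bool (joined (X \<inter> E2) k1 (g y0, t) \<and> joined (X \<inter> E2) k2 (g y0, t)))"
    proof (rule PEx_cong[OF refl])
      fix X assume X: "X \<subseteq> EF \<union> E2"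
      then have XX: "X = (X \<inter> EF) \<union> (X \<inter> E2)" by auto
      have W1: "\<Union>(X \<inter> EF) \<subseteq> range (blift f)" using UEF by auto
      have W2: "\<Union>(X \<inter> E2) \<subseteq> range (blift g)" using UE2 by auto
      have "joined X u (g y0, t) \<longleftrightarrow> (joined (X \<inter> EF) u k1 \<and> joined (X \<inter> E2) k1 (g y0, t)) \<or>
           (joined (X \<inter> EF) u k2 \<and> joined (X \<inter> E2) k2 (g y0, t))"
        using cut_other_side[OF W1 W2 K uW uW2 wW] XX by metis
      then show "(of_bool (joined X u (g y0, t)) :: real) = of_bool (joined (X \<inter> EF) u k1) * of_bool (joined (X \<inter> E2) k1 (g y0, t))
         + of_bool (joined (X \<inter> EF) u k2) * of_bool (joined (X \<inter> E2) k2 (g y0, t))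
         - of_bool (joined (X \<inter> EF) u k1 \<and> joined (X \<inter> EF) u k2) * of_bool (joined (X \<inter> E2) k1 (g y0, t) \<and> joined (X \<inter> E2) k2 (g y0, t))"
        by (simp only: of_bool_or_and)
    qed
    also have "\<dots> = al1 * be1 t + al2 * be2 t - al12 * be12 t"
    proof -
      have e1: "PEx (EF \<union> E2) mu (\<lambda>X. of_bool (joined (X \<inter> EF) u k1) * of_bool (joined (X \<inter> E2) k1 (g y0, t))) = al1 * be1 t"
        unfolding al1_def be1_def by (rule PEx_prod[OF fin_EF fin_E2 disj, where f = "\<lambda>X. of_bool (joined X u k1)" and g = "\<lambda>X. of_bool (joined X k1 (g y0, t))"])
      have e2: "PEx (EF \<union> E2) mu (\<lambda>X. of_bool (joined (X \<inter> EF) u k2) * of_bool (joined (X \<inter> E2) k2 (g y0, t))) = al2 * be2 t"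
        unfolding al2_def be2_def by (rule PEx_prod[OF fin_EF fin_E2 disj, where f = "\<lambda>X. of_bool (joined X u k2)" and g = "\<lambda>X. of_bool (joined X k2 (g y0, t))"])
      have e3: "PEx (EF \<union> E2) mu (\<lambda>X. of_bool (joined (X \<inter> EF) u k1 \<and> joined (X \<inter> EF) u k2) * of_bool (joined (X \<inter> E2) k1 (g y0, t) \<and> joined (X \<inter> E2) k2 (g y0, t))) = al12 * be12 t"
        unfolding al12_def be12_def by (rule PEx_prod[OF fin_EF fin_E2 disj, where f = "\<lambda>X. of_bool (joined X u k1 \<and> joined X u k2)" and g = "\<lambda>X. of_bool (joined X k1 (g y0, t) \<and> joined X k2 (g y0, t))"])
      show ?thesis unfolding PEx_diff PEx_add e1 e2 e3 ..
    qed
    finally show ?thesis .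
  qed
  have fk1: "bflip k1 = k2" "bflip k2 = k1" unfolding k1_def k2_def by simp_all
  have b1T: "be1 True = be2 False"
    unfolding be1_def be2_def
    by (subst PEx_E2_flip[OF sw]) (simp add: joined_flip fk1)
  have b2T: "be2 True = be1 False"
    unfolding be1_def be2_def
    by (subst PEx_E2_flip[OF sw]) (simp add: joined_flip fk1)
  have b12T: "be12 True = be12 False"
    unfolding be12_def
    by (subst PEx_E2_flip[OF sw]) (simp add: joined_flip fk1 conj_commute)
  have mu01: "0 \<le> mu vc" "mu vc \<le> 1" using mu_bounds_EF[OF sw vc_EF] by auto
  have al: "al2 \<le> al1"
    using A_ineq[OF sw mu01 x0 aA] unfolding al1_def al2_def u_def k1_def k2_def c_def by simp
  have beq: "be1 False = PEx EG (mu(vc := 0)) (\<lambda>X. of_bool (joined X (g y0, False) (g b, False)))"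
            "be2 False = PEx EG (mu(vc := 0)) (\<lambda>X. of_bool (joined X (g y0, False) (g b, True)))"
    unfolding be1_def be2_def E2_def PEx_remove_weight0[OF fin_EG vc_EG] k1_def k2_def c_def fg
    by (simp_all add: joined_commute)
  have be: "be2 False \<le> be1 False"
    using sw.A_ineq[OF sw' _ _ y0 bB, of 0] unfolding beq swEF swvc by simp
  have "al1 * be2 False + al2 * be1 False - al12 * be12 False \<le> al1 * be1 False + al2 * be2 False - al12 * be12 False"
  proof -
    have "0 \<le> (al1 - al2) * (be1 False - be2 False)" using al be by simp
    then show ?thesis by (simp add: algebra_simps)
  qed
  then show ?thesis using P[of True] P[of False] b1T b2T b12T unfolding u_def by simp
qed

lemma bunkbed_D: "bunkbed VD ED"
  unfolding bunkbed_def
proof (intro allI impI ballI)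
  fix mu x y assume sw: "symmetric_weight VD ED mu" and x: "x \<in> VD" and y: "y \<in> VD"
  interpret sw: glue VB EB VA EA g f b a
  proof unfold_locales
    fix x y assume "g x = f y" then show "x = b \<and> y = a" using fg2[of y x] by simp
  qed (use sgA sgB aA bB inj_f inj_g fg bbA bbB in simp_all)
  have swVD: "sw.VD = VD" unfolding sw.VD_def VD_def by auto
  have swED: "sw.ED = ED" unfolding sw.ED_def ED_def by auto
  have sw': "symmetric_weight sw.VD sw.ED mu" using sw swVD swED by simp
  show "perc_prob (bb_edges VD ED) mu (\<lambda>X. joined X (x, False) (y, True))
       \<le> perc_prob (bb_edges VD ED) mu (\<lambda>X. joined X (x, False) (y, False))"
  proof (cases "x \<in> f ` VA \<and> y \<in> f ` VA")
    case True
    then obtain x0 y0 where "x0 \<in> VA" "y0 \<in> VA" "x = f x0" "y = f y0" by blast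
    then show ?thesis using half_same[OF sw] by simp
  next
    case F1: False
    show ?thesis
    proof (cases "x \<in> g ` VB \<and> y \<in> g ` VB")
      case True
      then obtain x0 y0 where "x0 \<in> VB" "y0 \<in> VB" "x = g x0" "y = g y0" by blast
      then show ?thesis using sw.half_same[OF sw'] swVD swED by simp
    next
      case F2: False
      have rf: "z \<in> range f \<Longrightarrow> z \<in> VD \<Longrightarrow> z \<in> f ` VA" for z
      proof -
        assume "z \<in> range f" "z \<in> VD"
        then obtain w where w: "z = f w" by blast
        show "z \<in> f ` VA"
        proof (cases "z \<in> g ` VB")
          case True
          then obtain v where "z = g v" by blast
          then have "w = a" using fg2[of w v] w by simp
          then show ?thesis using w aA by simp
        next
          case False then show ?thesis using \<open>z \<in> VD\<close> unfolding VD_def by simp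
        qed
      qed
      have rg: "z \<in> range g \<Longrightarrow> z \<in> VD \<Longrightarrow> z \<in> g ` VB" for z
      proof -
        assume "z \<in> range g" "z \<in> VD"
        then obtain w where w: "z = g w" by blast
        show "z \<in> g ` VB"
        proof (cases "z \<in> f ` VA")
          case True
          then obtain v where "z = f v" by blast
          then have "w = b" using fg2[of v w] w by simp
          then show ?thesis using w bB by simp
        next
          case False then show ?thesis using \<open>z \<in> VD\<close> unfolding VD_def by simp
        qed
      qed
      consider "x \<in> f ` VA" "x \<notin> range g" "y \<in> g ` VB" "y \<notin> range f"
        | "x \<in> g ` VB" "x \<notin> range f" "y \<in> f ` VA" "y \<notin> range g"
        using x y F1 F2 rf rg unfolding VD_def by blast
      then show ?thesis
      proof cases
        case 1
        then obtain x0 y0 where "x0 \<in> VA" "y0 \<in> VB" "x = f x0" "y = g y0" by blast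
        then show ?thesis using half_other[OF sw] 1 by simp
      next
        case 2
        then obtain x0 y0 where "x0 \<in> VB" "y0 \<in> VA" "x = g x0" "y = f y0" by blast
        then show ?thesis using sw.half_other[OF sw'] 2 swVD swED by simp
      qed
    qed
  qed
qed

end

lemma inj_glue_map: "inj (glue_map a b)"
  unfolding inj_def glue_map_def by auto

theorem theorem3p5:
  fixes VA :: "'a set" and EA :: "'a set set" and VB :: "'b set" and EB :: "'b set set"
    and a :: 'a and b :: 'b
  assumes "simple_graph VA EA" and "simple_graph VB EB"
    and "a \<in> VA" and "b \<in> VB"
    and "bunkbed VA EA" and "bunkbed VB EB"
  shows "bunkbed (glue_vertices VA VB a b) (glue_edges EA EB a b)"
proof -
  interpret glue VA EA VB EB Inl "glue_map a b" a b
  proof (unfold_locales)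
    show "inj Inl" by (simp add: inj_def)
    show "inj (glue_map a b)" by (rule inj_glue_map)
    show "Inl a = glue_map a b b" by (simp add: glue_map_def)
    fix x y assume "(Inl x :: 'a + 'b) = glue_map a b y"
    then show "x = a \<and> y = b" by (auto simp: glue_map_def split: if_splits)
  qed (use assms in auto)
  have "glue_vertices VA VB a b = VD" unfolding glue_vertices_def VD_def ..
  moreover have "glue_edges EA EB a b = ED" unfolding glue_edges_def ED_def ..
  ultimately show ?thesis using bunkbed_D by simp
qed


end
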